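(* Let $D$ be a connected C-homogeneous digraph and let $m,n\ge 1$ be integers such that for all $x\in VD$ the subdigraph induced by $N^+(x)$ is isomorphic to $\bar K_n[C_3]$ and the subdigraph induced by $N^-(x)$ is isomorphic to $\bar K_m[C_3]$. Then $m=n=1$.
   Context: A digraph has an irreflexive, antisymmetric edge relation; connectedness refers to the underlying undirected graph. $D$ is C-homogeneous if every isomorphism between finite connected induced subdigraphs extends to an automorphism of $D$. $N^+(x)=\{y: xy\in ED\}$, $N^-(x)=\{y: yx\in ED\}$. $C_3$ is the directed triangle, $\bar K_n$ the digraph on $n$ vertices without edges, and $D[D']$ the lexicographic product: vertex set $VD\times VD'$, edge $(x,y)(x',y')$ iff $xx'\in ED$ or ($x=x'$ and $yy'\in ED'$). Thus $\bar K_n[C_3]$ is the disjoint union of $n$ directed triangles. *)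

theory Defs
  imports Main
begin

definition digraph :: "'a set \<Rightarrow> ('a \<Rightarrow> 'a \<Rightarrow> bool) \<Rightarrow> bool" where
  "digraph V E \<longleftrightarrow> (\<forall>x y. E x y \<longrightarrow> x \<in> V \<and> y \<in> V) \<and> (\<forall>x. \<not> E x x)
      \<and> (\<forall>x y. E x y \<longrightarrow> \<not> E y x)"

definition induced :: "('a \<Rightarrow> 'a \<Rightarrow> bool) \<Rightarrow> 'a set \<Rightarrow> 'a \<Rightarrow> 'a \<Rightarrow> bool" where
  "induced E S = (\<lambda>x y. x \<in> S \<and> y \<in> S \<and> E x y)"

definition dg_iso :: "('a \<Rightarrow> 'b) \<Rightarrow> 'a set \<Rightarrow> ('a \<Rightarrow> 'a \<Rightarrow> bool) \<Rightarrow> 'b set \<Rightarrow> ('b \<Rightarrow> 'b \<Rightarrow> bool) \<Rightarrow> bool" where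
  "dg_iso f V1 E1 V2 E2 \<longleftrightarrow> bij_betw f V1 V2 \<and> (\<forall>x\<in>V1. \<forall>y\<in>V1. E1 x y \<longleftrightarrow> E2 (f x) (f y))"

definition dg_isomorphic :: "'a set \<Rightarrow> ('a \<Rightarrow> 'a \<Rightarrow> bool) \<Rightarrow> 'b set \<Rightarrow> ('b \<Rightarrow> 'b \<Rightarrow> bool) \<Rightarrow> bool" where
  "dg_isomorphic V1 E1 V2 E2 \<longleftrightarrow> (\<exists>f. dg_iso f V1 E1 V2 E2)"

definition dg_connected :: "'a set \<Rightarrow> ('a \<Rightarrow> 'a \<Rightarrow> bool) \<Rightarrow> bool" where
  "dg_connected V E \<longleftrightarrow> V \<noteq> {} \<and>
     (\<forall>x\<in>V. \<forall>y\<in>V. (\<lambda>u v. u \<in> V \<and> v \<in> V \<and> (E u v \<or> E v u))\<^sup>*\<^sup>* x y)"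

definition out_nbhd :: "('a \<Rightarrow> 'a \<Rightarrow> bool) \<Rightarrow> 'a \<Rightarrow> 'a set" where
  "out_nbhd E x = {y. E x y}"

definition in_nbhd :: "('a \<Rightarrow> 'a \<Rightarrow> bool) \<Rightarrow> 'a \<Rightarrow> 'a set" where
  "in_nbhd E x = {y. E y x}"

definition c_homogeneous :: "'a set \<Rightarrow> ('a \<Rightarrow> 'a \<Rightarrow> bool) \<Rightarrow> bool" where
  "c_homogeneous V E \<longleftrightarrow>
    (\<forall>A B f. A \<subseteq> V \<and> B \<subseteq> V \<and> finite A \<and> finite B
       \<and> dg_connected A (induced E A) \<and> dg_connected B (induced E B)
       \<and> dg_iso f A (induced E A) B (induced E B)
       \<longrightarrow> (\<exists>g. dg_iso g V E V E \<and> (\<forall>x\<in>A. g x = f x)))"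

definition lex_verts :: "'a set \<Rightarrow> 'b set \<Rightarrow> ('a \<times> 'b) set" where
  "lex_verts V V' = V \<times> V'"

definition lex_edges :: "('a \<Rightarrow> 'a \<Rightarrow> bool) \<Rightarrow> ('b \<Rightarrow> 'b \<Rightarrow> bool) \<Rightarrow> ('a \<times> 'b) \<Rightarrow> ('a \<times> 'b) \<Rightarrow> bool" where
  "lex_edges E E' = (\<lambda>(x,y) (x',y'). E x x' \<or> (x = x' \<and> E' y y'))"

definition C3_verts :: "nat set" where "C3_verts = {0,1,2}"
definition C3_edges :: "nat \<Rightarrow> nat \<Rightarrow> bool" where
  "C3_edges = (\<lambda>a b. a \<in> C3_verts \<and> b \<in> C3_verts \<and> b = (a + 1) mod 3)"

definition Kbar_verts :: "nat \<Rightarrow> nat set" where "Kbar_verts n = {0..<n}"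
definition Kbar_edges :: "nat \<Rightarrow> nat \<Rightarrow> bool" where "Kbar_edges = (\<lambda>_ _. False)"

end

theory Submission
  imports Defs
begin

definition tri :: "'a set \<Rightarrow> ('a \<Rightarrow> 'a \<Rightarrow> bool) \<Rightarrow> bool" where
  "tri A E \<longleftrightarrow> (\<forall>a\<in>A. \<exists>c\<in>A. E a c) \<and> (\<forall>a\<in>A. \<exists>c\<in>A. E c a)
     \<and> (\<forall>a\<in>A. \<forall>c\<in>A. \<forall>d\<in>A. E a c \<longrightarrow> E a d \<longrightarrow> c = d)
     \<and> (\<forall>a\<in>A. \<forall>c\<in>A. \<forall>d\<in>A. E c a \<longrightarrow> E d a \<longrightarrow> c = d)
     \<and> (\<forall>a\<in>A. \<forall>c\<in>A. \<forall>d\<in>A. E a c \<longrightarrow> E c d \<longrightarrow> E d a)"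

lemma tri_rev: "tri A E \<Longrightarrow> tri A (\<lambda>a b. E b a)"
  unfolding tri_def by blast

lemma tri_iso:
  assumes iso: "dg_iso f A (induced E A) B F" and t: "tri B F"
  shows "tri A E"
proof -
  have inj: "inj_on f A" and im: "f ` A = B" using iso unfolding dg_iso_def bij_betw_def by auto
  have e: "\<And>a c. a \<in> A \<Longrightarrow> c \<in> A \<Longrightarrow> E a c \<longleftrightarrow> F (f a) (f c)"
    using iso unfolding dg_iso_def induced_def by auto
  have fa: "\<And>a. a \<in> A \<Longrightarrow> f a \<in> B" using im by auto
  have ex: "\<And>c'. c' \<in> B \<Longrightarrow> \<exists>c\<in>A. c' = f c" using im by auto
  show ?thesis unfolding tri_def
  proof (intro conjI ballI impI)
    fix a assume a: "a \<in> A"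
    from t fa[OF a] obtain c' where "c' \<in> B" "F (f a) c'" unfolding tri_def by blast
    then obtain c where "c \<in> A" "c' = f c" using ex by blast
    then show "\<exists>c\<in>A. E a c" using e a \<open>F (f a) c'\<close> by blast
  next
    fix a assume a: "a \<in> A"
    from t fa[OF a] obtain c' where "c' \<in> B" "F c' (f a)" unfolding tri_def by blast
    then obtain c where "c \<in> A" "c' = f c" using ex by blast
    then show "\<exists>c\<in>A. E c a" using e a \<open>F c' (f a)\<close> by blast
  next
    fix a c d assume h: "a \<in> A" "c \<in> A" "d \<in> A" "E a c" "E a d"
    have "F (f a) (f c)" "F (f a) (f d)" using e h by auto
    moreover have "f a \<in> B" "f c \<in> B" "f d \<in> B" using fa h by auto
    ultimately have "f c = f d" using t unfolding tri_def by blast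
    then show "c = d" using inj h unfolding inj_on_def by blast
  next
    fix a c d assume h: "a \<in> A" "c \<in> A" "d \<in> A" "E c a" "E d a"
    have "F (f c) (f a)" "F (f d) (f a)" using e h by auto
    moreover have "f a \<in> B" "f c \<in> B" "f d \<in> B" using fa h by auto
    ultimately have "f c = f d" using t unfolding tri_def by blast
    then show "c = d" using inj h unfolding inj_on_def by blast
  next
    fix a c d assume h: "a \<in> A" "c \<in> A" "d \<in> A" "E a c" "E c d"
    have "F (f a) (f c)" "F (f c) (f d)" using e h by auto
    moreover have "f a \<in> B" "f c \<in> B" "f d \<in> B" using fa h by auto
    ultimately have "F (f d) (f a)" using t unfolding tri_def by blast
    then show "E d a" using e h by blast
  qed
qed

lemma tri_lex: "tri (lex_verts (Kbar_verts k) C3_verts) (lex_edges Kbar_edges C3_edges)"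
proof -
  have mem: "\<And>i a. (i, a) \<in> lex_verts (Kbar_verts k) C3_verts \<longleftrightarrow> i < k \<and> a < 3"
    by (auto simp: lex_verts_def Kbar_verts_def C3_verts_def)
  have ed: "\<And>i a j b. lex_edges Kbar_edges C3_edges (i, a) (j, b) \<longleftrightarrow> i = j \<and> a < 3 \<and> b < 3 \<and> b = (a + 1) mod 3"
    by (auto simp: lex_edges_def Kbar_edges_def C3_edges_def C3_verts_def)
  let ?L = "lex_verts (Kbar_verts k) C3_verts" and ?F = "lex_edges Kbar_edges C3_edges"
  have 1: "\<forall>p\<in>?L. \<exists>q\<in>?L. ?F p q"
  proof
    fix p assume "p \<in> ?L"
    then show "\<exists>q\<in>?L. ?F p q"
      by (cases p) (rule_tac x="(fst p, (snd p+1) mod 3)" in bexI; auto simp: mem ed)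
  qed
  have 2: "\<forall>p\<in>?L. \<exists>q\<in>?L. ?F q p"
  proof
    fix p assume "p \<in> ?L"
    then show "\<exists>q\<in>?L. ?F q p"
      by (cases p) (rule_tac x="(fst p, (snd p+2) mod 3)" in bexI; auto simp: mem ed; presburger)
  qed
  have 3: "\<forall>p\<in>?L. \<forall>q\<in>?L. \<forall>r\<in>?L. ?F p q \<longrightarrow> ?F p r \<longrightarrow> q = r"
  proof (intro ballI impI)
    fix p q r assume "p \<in> ?L" "q \<in> ?L" "r \<in> ?L" "?F p q" "?F p r"
    then show "q = r" by (cases p; cases q; cases r) (simp add: mem ed)
  qed
  have 4: "\<forall>p\<in>?L. \<forall>q\<in>?L. \<forall>r\<in>?L. ?F q p \<longrightarrow> ?F r p \<longrightarrow> q = r"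
  proof (intro ballI impI)
    fix p q r assume "p \<in> ?L" "q \<in> ?L" "r \<in> ?L" "?F q p" "?F r p"
    then show "q = r" by (cases p; cases q; cases r) (simp add: mem ed; presburger)
  qed
  have 5: "\<forall>p\<in>?L. \<forall>q\<in>?L. \<forall>r\<in>?L. ?F p q \<longrightarrow> ?F q r \<longrightarrow> ?F r p"
  proof (intro ballI impI)
    fix p q r assume "p \<in> ?L" "q \<in> ?L" "r \<in> ?L" "?F p q" "?F q r"
    then show "?F r p" by (cases p; cases q; cases r) (simp add: mem ed; presburger)
  qed
  show ?thesis unfolding tri_def using 1 2 3 4 5 by blast
qed

lemma lex_props:
  assumes "dg_isomorphic A (induced E A) (lex_verts (Kbar_verts k) C3_verts) (lex_edges Kbar_edges C3_edges)"
  shows "tri A E" "finite A" "card A = 3 * k"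
proof -
  obtain f where f: "dg_iso f A (induced E A) (lex_verts (Kbar_verts k) C3_verts) (lex_edges Kbar_edges C3_edges)"
    using assms unfolding dg_isomorphic_def by blast
  show "tri A E" using tri_iso[OF f tri_lex] .
  have b: "bij_betw f A (lex_verts (Kbar_verts k) C3_verts)" using f unfolding dg_iso_def by blast
  have fl: "finite (lex_verts (Kbar_verts k) C3_verts)" by (simp add: lex_verts_def Kbar_verts_def C3_verts_def)
  have cl: "card (lex_verts (Kbar_verts k) C3_verts) = 3 * k"
    by (simp add: lex_verts_def Kbar_verts_def C3_verts_def card_cartesian_product)
  show "finite A" using b fl bij_betw_finite by blast
  show "card A = 3 * k" using b cl bij_betw_same_card by metis
qed


lemma conn_rev: "dg_connected A (\<lambda>a b. R b a) = dg_connected A R"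
proof -
  have "(\<lambda>u v. u \<in> A \<and> v \<in> A \<and> (R v u \<or> R u v)) = (\<lambda>u v. u \<in> A \<and> v \<in> A \<and> (R u v \<or> R v u))"
    by (intro ext) blast
  then show ?thesis unfolding dg_connected_def by simp
qed
lemma iso_rev: "dg_iso f A (\<lambda>a b. R b a) B (\<lambda>a b. S b a) = dg_iso f A R B S"
  unfolding dg_iso_def by auto
lemma induced_rev: "induced (\<lambda>a b. E b a) A = (\<lambda>a b. induced E A b a)"
  unfolding induced_def by (intro ext) blast
lemma chom_apply:
  assumes "c_homogeneous V E" "A \<subseteq> V" "B \<subseteq> V" "finite A" "finite B"
   "dg_connected A (induced E A)" "dg_connected B (induced E B)"
   "dg_iso f A (induced E A) B (induced E B)"
  shows "\<exists>g. dg_iso g V E V E \<and> (\<forall>x\<in>A. g x = f x)"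
proof -
  have "A \<subseteq> V \<and> B \<subseteq> V \<and> finite A \<and> finite B
       \<and> dg_connected A (induced E A) \<and> dg_connected B (induced E B)
       \<and> dg_iso f A (induced E A) B (induced E B)
       \<longrightarrow> (\<exists>g. dg_iso g V E V E \<and> (\<forall>x\<in>A. g x = f x))"
    using spec[of _ f, OF spec[of _ B, OF spec[of _ A, OF assms(1)[unfolded c_homogeneous_def]]]] .
  then show ?thesis using assms(2-8) by simp
qed
lemma chom_rev: assumes "c_homogeneous V E" shows "c_homogeneous V (\<lambda>a b. E b a)"
  unfolding c_homogeneous_def
proof (intro allI impI)
  fix A B f
  assume h: "A \<subseteq> V \<and> B \<subseteq> V \<and> finite A \<and> finite B \<and>
       dg_connected A (induced (\<lambda>a b. E b a) A) \<and>
       dg_connected B (induced (\<lambda>a b. E b a) B) \<and>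
       dg_iso f A (induced (\<lambda>a b. E b a) A) B (induced (\<lambda>a b. E b a) B)"
  have c1: "dg_connected A (induced E A)"
    using h conn_rev[of A "induced E A"] induced_rev[of E A] by simp
  have c2: "dg_connected B (induced E B)"
    using h conn_rev[of B "induced E B"] induced_rev[of E B] by simp
  have i: "dg_iso f A (induced E A) B (induced E B)"
    using h iso_rev[of f A "induced E A" B "induced E B"] induced_rev[of E A] induced_rev[of E B] by simp
  obtain g where g: "dg_iso g V E V E" "\<forall>x\<in>A. g x = f x"
    using chom_apply[OF assms _ _ _ _ c1 c2 i] h by blast
  have "dg_iso g V (\<lambda>a b. E b a) V (\<lambda>a b. E b a)" using g(1) iso_rev[of g V E V E] by simp
  then show "\<exists>g. dg_iso g V (\<lambda>a b. E b a) V (\<lambda>a b. E b a) \<and> (\<forall>x\<in>A. g x = f x)" using g(2) by blast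
qed

lemma conn3:
  assumes "E a b \<or> E b a" "E b c \<or> E c b"
  shows "dg_connected {a,b,c} (induced E {a,b,c})"
proof -
  let ?R = "\<lambda>u v. u \<in> {a,b,c} \<and> v \<in> {a,b,c} \<and> (induced E {a,b,c} u v \<or> induced E {a,b,c} v u)"
  have ab: "?R a b" "?R b a" and bc: "?R b c" "?R c b" using assms unfolding induced_def by auto
  have "?R\<^sup>*\<^sup>* u v" if "u \<in> {a,b,c}" "v \<in> {a,b,c}" for u v
  proof -
    have r: "?R\<^sup>*\<^sup>* a b" "?R\<^sup>*\<^sup>* b a" "?R\<^sup>*\<^sup>* b c" "?R\<^sup>*\<^sup>* c b" using ab bc by auto
    have "?R\<^sup>*\<^sup>* a c" using r(1) r(3) by (rule rtranclp_trans)
    moreover have "?R\<^sup>*\<^sup>* c a" using r(4) r(2) by (rule rtranclp_trans)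
    ultimately show ?thesis using that r by auto
  qed
  then show ?thesis unfolding dg_connected_def by blast
qed

lemma iso3:
  assumes "a1 \<noteq> a2" "a1 \<noteq> a3" "a2 \<noteq> a3" "b1 \<noteq> b2" "b1 \<noteq> b3" "b2 \<noteq> b3"
    and "f a1 = b1" "f a2 = b2" "f a3 = b3"
    and "E a1 a2 = E b1 b2" "E a2 a1 = E b2 b1" "E a1 a3 = E b1 b3" "E a3 a1 = E b3 b1"
      "E a2 a3 = E b2 b3" "E a3 a2 = E b3 b2"
    and "E a1 a1 = E b1 b1" "E a2 a2 = E b2 b2" "E a3 a3 = E b3 b3"
  shows "dg_iso f {a1,a2,a3} (induced E {a1,a2,a3}) {b1,b2,b3} (induced E {b1,b2,b3})"
proof -
  have e: "\<forall>x\<in>{a1,a2,a3}. \<forall>y\<in>{a1,a2,a3}. E x y = E (f x) (f y)" using assms by simp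
  have im: "f ` {a1,a2,a3} = {b1,b2,b3}" using assms by simp
  have inj: "inj_on f {a1,a2,a3}" using assms unfolding inj_on_def by simp
  have "\<forall>x\<in>{a1,a2,a3}. \<forall>y\<in>{a1,a2,a3}. induced E {a1,a2,a3} x y = induced E {b1,b2,b3} (f x) (f y)"
  proof (intro ballI)
    fix x y assume xy: "x \<in> {a1,a2,a3}" "y \<in> {a1,a2,a3}"
    then have "f x \<in> {b1,b2,b3}" "f y \<in> {b1,b2,b3}" using im by blast+
    then show "induced E {a1,a2,a3} x y = induced E {b1,b2,b3} (f x) (f y)"
      using xy e unfolding induced_def by (elim insertE emptyE; simp)
  qed
  then show ?thesis unfolding dg_iso_def bij_betw_def using im inj by blast
qed


lemma main:
  assumes dg: "digraph V E" and ch: "c_homogeneous V E"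
    and tout: "\<forall>u\<in>V. tri (out_nbhd E u) E" and tin: "\<forall>u\<in>V. tri (in_nbhd E u) E"
    and xy: "E x y" and s1x: "E s1 x" and fin: "finite (out_nbhd E y)"
  shows "card (out_nbhd E y) \<le> 3"
proof -
  have VL: "\<And>a b. E a b \<Longrightarrow> a \<in> V" and VR: "\<And>a b. E a b \<Longrightarrow> b \<in> V"
    and irr: "\<And>a. \<not> E a a" and asym: "\<And>a b. E a b \<Longrightarrow> \<not> E b a"
    using dg unfolding digraph_def by blast+
  have S1o: "\<And>u a. E u a \<Longrightarrow> \<exists>c. E u c \<and> E a c"
  proof -
    fix u a assume h: "E u a"
    then have "tri (out_nbhd E u) E" using tout VL by blast
    then show "\<exists>c. E u c \<and> E a c" using h unfolding tri_def out_nbhd_def by blast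
  qed
  have S1i: "\<And>u a. E a u \<Longrightarrow> \<exists>c. E c u \<and> E a c"
  proof -
    fix u a assume h: "E a u"
    then have "tri (in_nbhd E u) E" using tin VR by blast
    then show "\<exists>c. E c u \<and> E a c" using h unfolding tri_def in_nbhd_def by blast
  qed
  have S2o: "\<And>u a c d. E u a \<Longrightarrow> E u c \<Longrightarrow> E u d \<Longrightarrow> E a c \<Longrightarrow> E a d \<Longrightarrow> c = d"
  proof -
    fix u a c d assume h: "E u a" "E u c" "E u d" "E a c" "E a d"
    then have "tri (out_nbhd E u) E" using tout VL by blast
    then show "c = d" using h unfolding tri_def out_nbhd_def by blast
  qed
  have P2o: "\<And>u a c d. E u a \<Longrightarrow> E u c \<Longrightarrow> E u d \<Longrightarrow> E c a \<Longrightarrow> E d a \<Longrightarrow> c = d"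
  proof -
    fix u a c d assume h: "E u a" "E u c" "E u d" "E c a" "E d a"
    then have "tri (out_nbhd E u) E" using tout VL by blast
    then show "c = d" using h unfolding tri_def out_nbhd_def by blast
  qed
  have Co: "\<And>u a c d. E u a \<Longrightarrow> E u c \<Longrightarrow> E u d \<Longrightarrow> E a c \<Longrightarrow> E c d \<Longrightarrow> E d a"
  proof -
    fix u a c d assume h: "E u a" "E u c" "E u d" "E a c" "E c d"
    then have "tri (out_nbhd E u) E" using tout VL by blast
    then show "E d a" using h unfolding tri_def out_nbhd_def by blast
  qed
  have S2i: "\<And>u a c d. E a u \<Longrightarrow> E c u \<Longrightarrow> E d u \<Longrightarrow> E a c \<Longrightarrow> E a d \<Longrightarrow> c = d"
  proof -
    fix u a c d assume h: "E a u" "E c u" "E d u" "E a c" "E a d"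
    then have "tri (in_nbhd E u) E" using tin VR by blast
    then show "c = d" using h unfolding tri_def in_nbhd_def by blast
  qed
  have Ci: "\<And>u a c d. E a u \<Longrightarrow> E c u \<Longrightarrow> E d u \<Longrightarrow> E a c \<Longrightarrow> E c d \<Longrightarrow> E d a"
  proof -
    fix u a c d assume h: "E a u" "E c u" "E d u" "E a c" "E c d"
    then have "tri (in_nbhd E u) E" using tin VR by blast
    then show "E d a" using h unfolding tri_def in_nbhd_def by blast
  qed
  have isoV: "\<And>g a c. dg_iso g V E V E \<Longrightarrow> a \<in> V \<Longrightarrow> c \<in> V \<Longrightarrow> E a c = E (g a) (g c)"
    unfolding dg_iso_def by blast
  have x: "x \<in> V" using VL xy .
  obtain z where xz: "E x z" and yz: "E y z" using S1o[OF xy] by blast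
  obtain w where xw: "E x w" and zw: "E z w" using S1o[OF xz] by blast
  have wy: "E w y" using Co[OF xy xz xw yz zw] .
  obtain s2 where s2x: "E s2 x" and s12: "E s1 s2" using S1i[OF s1x] by blast
  obtain s3 where s3x: "E s3 x" and s23: "E s2 s3" using S1i[OF s2x] by blast
  have s31: "E s3 s1" using Ci[OF s1x s2x s3x s12 s23] .
  obtain b where yb: "E y b" and zb: "E z b" and wb: "E w b"
  proof -
    let ?f = "\<lambda>v. if v = y then s1 else if v = z then s2 else s3"
    have d: "y \<noteq> z" "y \<noteq> w" "z \<noteq> w" "s1 \<noteq> s2" "s1 \<noteq> s3" "s2 \<noteq> s3"
      using irr yz wy zw s12 s23 s31 by metis+
    have iso: "dg_iso ?f {y,z,w} (induced E {y,z,w}) {s1,s2,s3} (induced E {s1,s2,s3})"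
      apply (rule iso3)
      using d yz zw wy s12 s23 s31 asym[OF yz] asym[OF zw] asym[OF wy]
        asym[OF s12] asym[OF s23] asym[OF s31] irr by auto
    have c1: "dg_connected {y,z,w} (induced E {y,z,w})" using yz zw by (intro conn3) auto
    have c2: "dg_connected {s1,s2,s3} (induced E {s1,s2,s3})" using s12 s23 by (intro conn3) auto
    have sub1: "{y,z,w} \<subseteq> V" using xy xz xw VR by blast
    have sub2: "{s1,s2,s3} \<subseteq> V" using s1x s2x s3x VL by blast
    obtain g where g: "dg_iso g V E V E" and gf: "\<forall>v\<in>{y,z,w}. g v = ?f v"
      using chom_apply[OF ch sub1 sub2 _ _ c1 c2 iso] by auto
    have "g ` V = V" using g unfolding dg_iso_def bij_betw_def by blast
    then obtain b where bV: "b \<in> V" and gb: "g b = x" using x by force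
    have gy: "g y = s1" "g z = s2" "g w = s3" using gf d by auto
    have "E y b" using isoV[OF g _ bV, of y] sub1 gy gb s1x by auto
    moreover have "E z b" using isoV[OF g _ bV, of z] sub1 gy gb s2x by auto
    moreover have "E w b" using isoV[OF g _ bV, of w] sub1 gy gb s3x by auto
    ultimately show ?thesis using that by blast
  qed
  have bx: "b \<noteq> x" using yb xy asym by blast
  have nxb: "\<not> E x b"
  proof
    assume "E x b"
    then have "z = b" using S2o[OF xy xz _ yz yb] by blast
    then show False using zb irr by simp
  qed
  have nbx: "\<not> E b x"
  proof
    assume bx': "E b x"
    obtain t where tz: "E t z" and yt: "E y t" using S1i[OF yz] by blast
    have tx: "E t x" using Ci[OF xz yz tz xy yt] .
    obtain t2 where yt2: "E y t2" and bt2: "E b t2" using S1o[OF yb] by blast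
    have t2z: "E t2 z" using Co[OF yz yb yt2 zb bt2] .
    have "t = t2" using P2o[OF yz yt yt2 tz t2z] .
    then have bt: "E b t" using bt2 by simp
    obtain t' where t'w: "E t' w" and zt': "E z t'" using S1i[OF zw] by blast
    have t'x: "E t' x" using Ci[OF xw zw t'w xz zt'] .
    obtain t3 where zt3: "E z t3" and bt3: "E b t3" using S1o[OF zb] by blast
    have t3w: "E t3 w" using Co[OF zw zb zt3 wb bt3] .
    have "t' = t3" using P2o[OF zw zt' zt3 t'w t3w] .
    then have bt': "E b t'" using bt3 by simp
    have "t = t'" using S2i[OF bx' tx t'x bt bt'] .
    then have "z = w" using S2o[OF tx tz _ xz xw] t'w by simp
    then show False using zw irr by simp
  qed
  show ?thesis
  proof (rule ccontr)
    assume "\<not> card (out_nbhd E y) \<le> 3"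
    then have big: "card (out_nbhd E y) > 3" by simp
    obtain z' where yz': "E y z'" and zz': "E z z'" using S1o[OF yz] by blast
    obtain z'' where yz'': "E y z''" and z'z'': "E z' z''" using S1o[OF yz'] by blast
    have z''z: "E z'' z" using Co[OF yz yz' yz'' zz' z'z''] .
    have "card {z, z', z''} \<le> 3" by (simp add: card_insert_if)
    then have "\<not> out_nbhd E y \<subseteq> {z, z', z''}"
      using big card_mono[of "{z,z',z''}" "out_nbhd E y"] by auto
    then obtain p where yp: "E y p" and pn: "p \<notin> {z, z', z''}" unfolding out_nbhd_def by blast
    have nsucc: "r \<notin> {z, z', z''}" if "E y q" "q \<notin> {z, z', z''}" "E q r" "E y r" for q r
    proof
      assume "r \<in> {z, z', z''}"
      then consider "r = z" | "r = z'" | "r = z''" by blast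
      then show False
      proof cases
        case 1 then have "q = z''" using P2o[OF yz that(1) yz''] that(3) z''z by blast
        then show False using that(2) by simp
      next
        case 2 then have "q = z" using P2o[OF yz' that(1) yz] that(3) zz' by blast
        then show False using that(2) by simp
      next
        case 3 then have "q = z'" using P2o[OF yz'' that(1) yz'] that(3) z'z'' by blast
        then show False using that(2) by simp
      qed
    qed
    have into: "E q x" if yq: "E y q" and qn: "q \<notin> {z, z', z''}" for q
    proof (rule ccontr)
      assume nqx: "\<not> E q x"
      have nzq: "\<not> E z q"
      proof
        assume "E z q" then have "q = z'" using S2o[OF yz yq yz'] zz' by blast
        then show False using qn by simp
      qed
      have nxq: "\<not> E x q"
      proof
        assume "E x q" then have "q = z" using S2o[OF xy _ xz yq yz] by blast
        then show False using qn by simp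
      qed
      have qx: "q \<noteq> x" using yq xy asym by blast
      let ?f = "\<lambda>v. if v = q then b else v"
      have d: "x \<noteq> y" "x \<noteq> q" "y \<noteq> q" "x \<noteq> b" "y \<noteq> b"
        using irr xy qx yq yb bx by metis+
      have iso: "dg_iso ?f {x,y,q} (induced E {x,y,q}) {x,y,b} (induced E {x,y,b})"
        apply (rule iso3)
        using d xy yq yb nxq nqx nxb nbx asym[OF xy] asym[OF yq] asym[OF yb] irr by auto
      have c1: "dg_connected {x,y,q} (induced E {x,y,q})" using xy yq by (intro conn3) auto
      have c2: "dg_connected {x,y,b} (induced E {x,y,b})" using xy yb by (intro conn3) auto
      have sub1: "{x,y,q} \<subseteq> V" using xy yq VR VL by blast
      have sub2: "{x,y,b} \<subseteq> V" using xy yb VR VL by blast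
      obtain g where g: "dg_iso g V E V E" and gf: "\<forall>v\<in>{x,y,q}. g v = ?f v"
        using chom_apply[OF ch sub1 sub2 _ _ c1 c2 iso] by auto
      have gx: "g x = x" and gy: "g y = y" and gq: "g q = b" using gf d by auto
      have zV: "z \<in> V" using VR xz .
      have gzV: "g z \<in> V" using g zV unfolding dg_iso_def bij_betw_def by blast
      have "E x (g z)" using isoV[OF g x zV] xz gx by simp
      moreover have "E y (g z)" using isoV[OF g _ zV, of y] sub1 yz gy by simp
      ultimately have gz: "g z = z" using S2o[OF xy _ xz _ yz] by blast
      have "E z q = E z b" using isoV[OF g zV, of q] sub1 gz gq by simp
      then show False using nzq zb by simp
    qed
    obtain p' where yp': "E y p'" and pp': "E p p'" using S1o[OF yp] by blast
    obtain p'' where yp'': "E y p''" and p'p'': "E p' p''" using S1o[OF yp'] by blast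
    have p'n: "p' \<notin> {z, z', z''}" using nsucc[OF yp pn pp' yp'] .
    have p''n: "p'' \<notin> {z, z', z''}" using nsucc[OF yp' p'n p'p'' yp''] .
    have px: "E p x" and p'x: "E p' x" and p''x: "E p'' x"
      using into[OF yp pn] into[OF yp' p'n] into[OF yp'' p''n] .
    have lemD: "\<exists>s. E x s \<and> E s y \<and> E s v' \<and> E v s"
      if vx: "E v x" and v'x: "E v' x" and vv': "E v v'" and yv: "E y v" and yv': "E y v'" for v v'
    proof -
      obtain s where vs: "E v s" and xs: "E x s" using S1o[OF vx] by blast
      have sv': "E s v'" using Co[OF vv' vx vs v'x xs] .
      have "E s y" using Ci[OF yv' vv' sv' yv vs] .
      then show ?thesis using xs sv' vs by blast
    qed
    obtain sa where xsa: "E x sa" and say: "E sa y" and sap': "E sa p'"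
      using lemD[OF px p'x pp' yp yp'] by blast
    obtain sb where xsb: "E x sb" and sby: "E sb y" and p'sb: "E p' sb"
      using lemD[OF p'x p''x p'p'' yp' yp''] by blast
    have "sa = sb" using P2o[OF xy xsa xsb say sby] .
    then show False using sap' p'sb asym by blast
  qed
qed


theorem lemma3p8:
  fixes V :: "'a set" and E :: "'a \<Rightarrow> 'a \<Rightarrow> bool" and m n :: nat
  assumes "digraph V E"
    and "dg_connected V E"
    and "c_homogeneous V E"
    and "m \<ge> 1" and "n \<ge> 1"
    and "\<forall>x\<in>V. dg_isomorphic (out_nbhd E x) (induced E (out_nbhd E x))
                 (lex_verts (Kbar_verts n) C3_verts) (lex_edges Kbar_edges C3_edges)"
    and "\<forall>x\<in>V. dg_isomorphic (in_nbhd E x) (induced E (in_nbhd E x))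
                 (lex_verts (Kbar_verts m) C3_verts) (lex_edges Kbar_edges C3_edges)"
  shows "m = 1 \<and> n = 1"
proof -
  note dg = assms(1) and ch = assms(3)
  have tout: "\<forall>u\<in>V. tri (out_nbhd E u) E" and fo: "\<forall>u\<in>V. finite (out_nbhd E u)"
    and co: "\<forall>u\<in>V. card (out_nbhd E u) = 3 * n"
    using lex_props[of "out_nbhd E _" E n] assms(6) by blast+
  have tin: "\<forall>u\<in>V. tri (in_nbhd E u) E" and fi: "\<forall>u\<in>V. finite (in_nbhd E u)"
    and ci: "\<forall>u\<in>V. card (in_nbhd E u) = 3 * m"
    using lex_props[of "in_nbhd E _" E m] assms(7) by blast+
  have VR: "\<And>a b. E a b \<Longrightarrow> b \<in> V" and VL: "\<And>a b. E a b \<Longrightarrow> a \<in> V"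
    using dg unfolding digraph_def by blast+
  obtain x where x: "x \<in> V" using assms(2) unfolding dg_connected_def by blast
  have "out_nbhd E x \<noteq> {}" using co x assms(5) by (metis card.empty mult_is_0 not_one_le_zero zero_neq_numeral)
  then obtain y where xy: "E x y" unfolding out_nbhd_def by blast
  have "in_nbhd E x \<noteq> {}" using ci x assms(4) by (metis card.empty mult_is_0 not_one_le_zero zero_neq_numeral)
  then obtain s where sx: "E s x" unfolding in_nbhd_def by blast
  have yV: "y \<in> V" using VR xy .
  have sV: "s \<in> V" using VL sx .
  have "card (out_nbhd E y) \<le> 3" using main[OF dg ch tout tin xy sx] fo yV by blast
  then have n1: "n = 1" using co yV assms(5) by simp
  let ?E' = "\<lambda>a b. E b a"
  have dg': "digraph V ?E'" using dg unfolding digraph_def by blast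
  have ch': "c_homogeneous V ?E'" using chom_rev[OF ch] .
  have oi: "\<And>u. out_nbhd ?E' u = in_nbhd E u" "\<And>u. in_nbhd ?E' u = out_nbhd E u"
    unfolding out_nbhd_def in_nbhd_def by simp_all
  have tout': "\<forall>u\<in>V. tri (out_nbhd ?E' u) ?E'" using tin tri_rev oi by metis
  have tin': "\<forall>u\<in>V. tri (in_nbhd ?E' u) ?E'" using tout tri_rev oi by metis
  have "card (out_nbhd ?E' s) \<le> 3" using main[OF dg' ch' tout' tin' sx xy] fi sV oi by simp
  then have "m = 1" using ci sV oi assms(4) by simp
  then show ?thesis using n1 by simp
qed

end
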